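(* Let $\lambda>0$, $\mathbf a>0$. For $y\in\mathbb R$ define $\mathscr H_\lambda(y)=\int_0^{\mathbf a}\big(u-\lambda\ln G(u,1-y)\big)G(u,1-y)\,du$. Then $\mathscr H_\lambda$ is increasing on $(-\infty,0]$ and decreasing on $[0,\infty)$, so that $\max_{y\in\mathbb R}\mathscr H_\lambda(y)=\mathscr H_\lambda(0)=f_\lambda(0)=\lambda\ln\big(\lambda(e^{\mathbf a/\lambda}-1)\big)$. In particular this maximum is positive if $\mathbf a>\lambda\ln(1+1/\lambda)$, zero if $\mathbf a=\lambda\ln(1+1/\lambda)$ and negative if $\mathbf a<\lambda\ln(1+1/\lambda)$.
   Context: Gibbs density: for $u\in[0,\mathbf a]$, $s\in\mathbb R$, $G(u,s)=\frac{s\,e^{us/\lambda}}{\lambda(e^{\mathbf a s/\lambda}-1)}$ if $s\neq0$ and $G(u,0)=1/\mathbf a$. $f_\lambda(y)=\lambda\ln\frac{\lambda(e^{\mathbf a(1-y)/\lambda}-1)}{1-y}$ for $y\neq 1$, $f_\lambda(1)=\lambda\ln\mathbf a$. *)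

theory Defs
  imports "HOL-Analysis.Analysis"
begin

definition gibbsG :: "real \<Rightarrow> real \<Rightarrow> real \<Rightarrow> real \<Rightarrow> real" where
  "gibbsG lam a u s =
     (if s \<noteq> 0 then s * exp (u * s / lam) / (lam * (exp (a * s / lam) - 1)) else 1 / a)"

definition f_lam :: "real \<Rightarrow> real \<Rightarrow> real \<Rightarrow> real" where
  "f_lam lam a y =
     (if y \<noteq> 1 then lam * ln (lam * (exp (a * (1 - y) / lam) - 1) / (1 - y)) else lam * ln a)"

definition H_lam :: "real \<Rightarrow> real \<Rightarrow> real \<Rightarrow> real" where
  "H_lam lam a y =
     integral {0..a} (\<lambda>u. (u - lam * ln (gibbsG lam a u (1 - y))) * gibbsG lam a u (1 - y))"

end

theory Submission
  imports Defs
begin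

definition W :: "real \<Rightarrow> real \<Rightarrow> nat \<Rightarrow> real \<Rightarrow> real" where
  "W lam a k s = integral {0..a} (\<lambda>u. u ^ k * exp (u * s / lam))"

lemma W_int: fixes lam s a :: real assumes "lam > 0" shows "(\<lambda>u. u ^ k * exp (u * s / lam)) integrable_on {0..a}"
  by (rule integrable_continuous_interval) (intro continuous_intros, use assms in auto)

lemma W_deriv:
  assumes "lam > 0"
  shows "((W lam a k) has_field_derivative (W lam a (Suc k) s / lam)) (at s)"
proof -
  have "((\<lambda>s. integral (cbox 0 a) (\<lambda>u. u ^ k * exp (u * s / lam))) has_field_derivative
        integral (cbox 0 a) (\<lambda>u. u ^ Suc k * exp (u * s / lam) / lam)) (at s within UNIV)"
  proof (rule leibniz_rule_field_derivative)
    fix x t :: real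
    show "((\<lambda>x. t ^ k * exp (t * x / lam)) has_field_derivative t ^ Suc k * exp (t * x / lam) / lam)
          (at x within UNIV)"
      using assms by (auto intro!: derivative_eq_intros simp: field_simps)
  next
    fix x :: real
    show "(\<lambda>u. u ^ k * exp (u * x / lam)) integrable_on cbox 0 a"
      using W_int[OF assms] by (metis cbox_interval)
  next
    show "continuous_on (UNIV \<times> cbox 0 a) (\<lambda>(x, t). t ^ Suc k * exp (t * x / lam) / lam)"
      using assms unfolding case_prod_beta by (intro continuous_intros) auto
  qed auto
  moreover have "integral (cbox 0 a) (\<lambda>u. u ^ Suc k * exp (u * s / lam) / lam) = W lam a (Suc k) s / lam"
    unfolding W_def cbox_interval by simp
  ultimately show ?thesis unfolding W_def cbox_interval by simp
qed

lemma W0_closed: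
  fixes lam a s :: real
  assumes "lam > 0" "a > 0" "s \<noteq> 0"
  shows "W lam a 0 s = lam * (exp (a * s / lam) - 1) / s"
proof -
  have "((\<lambda>u. exp (u * s / lam)) has_integral
         (lam / s * exp (a * s / lam) - lam / s * exp (0 * s / lam))) {0..a}"
  proof (rule fundamental_theorem_of_calculus)
    show "0 \<le> a" using assms by simp
    fix x assume "x \<in> {0..a}"
    show "((\<lambda>u. lam / s * exp (u * s / lam)) has_vector_derivative exp (x * s / lam)) (at x within {0..a})"
      unfolding has_real_derivative_iff_has_vector_derivative[symmetric]
      using assms by (auto intro!: derivative_eq_intros simp: field_simps)
  qed
  then have "integral {0..a} (\<lambda>u. exp (u * s / lam)) = lam / s * exp (a * s / lam) - lam / s"
    by (simp add: integral_unique)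
  moreover have "lam * (exp (a * s / lam) - 1) / s = lam / s * exp (a * s / lam) - lam / s"
    using assms by (simp add: field_simps)
  ultimately show ?thesis unfolding W_def by simp
qed

lemma W0_zero:
  fixes lam a :: real
  assumes "a > 0"
  shows "W lam a 0 0 = a"
  unfolding W_def using assms by simp

lemma W0_pos:
  fixes lam a s :: real
  assumes "lam > 0" "a > 0"
  shows "W lam a 0 s > 0"
proof (cases "s = 0")
  case True then show ?thesis using W0_zero assms by simp
next
  case False
  have "(exp (a * s / lam) - 1) / s > 0"
  proof (cases "s > 0")
    case True
    then have "a * s / lam > 0" using assms by simp
    then show ?thesis using True by simp
  next
    case f: False
    then have "s < 0" using False by simp
    then have "a * s / lam < 0" using assms by (simp add: divide_neg_pos mult_pos_neg)
    then have "exp (a * s / lam) < 1" by simp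
    then show ?thesis using \<open>s < 0\<close> by (simp add: divide_neg_neg)
  qed
  then have "lam * ((exp (a * s / lam) - 1) / s) > 0" using assms by (intro mult_pos_pos)
  then show ?thesis using W0_closed[OF assms False] by (metis times_divide_eq_right)
qed

lemma G_eq:
  fixes lam a s u :: real
  assumes "lam > 0" "a > 0"
  shows "gibbsG lam a u s = exp (u * s / lam) / W lam a 0 s"
proof (cases "s = 0")
  case True then show ?thesis using W0_zero assms by (simp add: gibbsG_def)
next
  case False
  then show ?thesis by (simp add: gibbsG_def W0_closed[OF assms False] divide_divide_eq_right mult.commute)
qed

lemma H_eq:
  fixes lam a y :: real
  assumes "lam > 0" "a > 0"
  shows "H_lam lam a y = y * W lam a 1 (1 - y) / W lam a 0 (1 - y) + lam * ln (W lam a 0 (1 - y))"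
proof -
  define s where "s = 1 - y"
  define Z where "Z = W lam a 0 s"
  have Z: "Z > 0" unfolding Z_def using W0_pos assms by simp
  have pt: "(u - lam * ln (gibbsG lam a u s)) * gibbsG lam a u s =
        (y / Z) * (u ^ 1 * exp (u * s / lam)) + (lam * ln Z / Z) * (u ^ 0 * exp (u * s / lam))" for u
  proof -
    have lnG: "ln (gibbsG lam a u s) = u * s / lam - ln Z"
      unfolding G_eq[OF assms] Z_def[symmetric] using Z by (simp add: ln_div)
    show ?thesis unfolding lnG unfolding G_eq[OF assms] Z_def[symmetric] using assms Z
      by (simp add: s_def field_simps)
  qed
  have "H_lam lam a y = integral {0..a} (\<lambda>u. (y / Z) * (u ^ 1 * exp (u * s / lam)) + (lam * ln Z / Z) * (u ^ 0 * exp (u * s / lam)))"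
    unfolding H_lam_def s_def[symmetric] pt ..
  also have "\<dots> = (y / Z) * W lam a 1 s + (lam * ln Z / Z) * Z"
  proof -
    have i1: "(\<lambda>u. (y / Z) * (u ^ 1 * exp (u * s / lam))) integrable_on {0..a}"
      by (rule integrable_on_mult_right[OF W_int[OF assms(1)]])
    have i2: "(\<lambda>u. (lam * ln Z / Z) * (u ^ 0 * exp (u * s / lam))) integrable_on {0..a}"
      by (rule integrable_on_mult_right[OF W_int[OF assms(1)]])
    show ?thesis unfolding integral_add[OF i1 i2] integral_mult_right
      unfolding W_def Z_def by simp
  qed
  finally show ?thesis using Z unfolding s_def Z_def by simp
qed

lemma W_deriv_chain [derivative_intros]:
  fixes lam a :: real
  assumes "lam > 0" "(f has_real_derivative f') (at x within S)"
  shows "((\<lambda>x. W lam a k (f x)) has_real_derivative W lam a (Suc k) (f x) / lam * f') (at x within S)"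
  by (rule DERIV_chain2[OF W_deriv[OF assms(1)] assms(2)])

lemma var_pos:
  fixes lam a s :: real
  assumes "lam > 0" "a > 0"
  shows "W lam a 2 s * W lam a 0 s - (W lam a 1 s)^2 > 0"
proof -
  define Z where "Z = W lam a 0 s"
  have Z: "Z > 0" unfolding Z_def using W0_pos assms by simp
  define m where "m = W lam a 1 s / Z"
  define e where "e = (\<lambda>u. exp (u * s / lam))"
  have ie: "(\<lambda>u. u ^ k * e u) integrable_on {0..a}" for k
    unfolding e_def by (rule W_int[OF assms(1)])
  have pt: "(u - m)^2 * e u = (u ^ 2 * e u - (2 * m) * (u ^ 1 * e u)) + m^2 * (u ^ 0 * e u)" for u
    by (simp add: power2_eq_square algebra_simps)
  have i1: "(\<lambda>u. (2 * m) * (u ^ 1 * e u)) integrable_on {0..a}"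
    by (rule integrable_on_mult_right[OF ie])
  have i2: "(\<lambda>u. m^2 * (u ^ 0 * e u)) integrable_on {0..a}"
    by (rule integrable_on_mult_right[OF ie])
  have i3: "(\<lambda>u. u ^ 2 * e u - (2 * m) * (u ^ 1 * e u)) integrable_on {0..a}"
    by (rule integrable_diff[OF ie i1])
  have eq: "integral {0..a} (\<lambda>u. (u - m)^2 * e u) = W lam a 2 s - 2 * m * W lam a 1 s + m^2 * Z"
    unfolding pt integral_add[OF i3 i2] integral_diff[OF ie i1] integral_mult_right
    unfolding W_def Z_def e_def by simp
  define c where "c = min 1 (exp (a * s / lam))"
  have c: "c > 0" unfolding c_def by simp
  have ce: "c \<le> e u" if "u \<in> {0..a}" for u
  proof (cases "s \<ge> 0")
    case True
    then have "u * s / lam \<ge> 0" using that assms by simp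
    then have "1 \<le> e u" unfolding e_def by simp
    then show ?thesis unfolding c_def by simp
  next
    case False
    then have "u * s \<ge> a * s" using that by (intro mult_right_mono_neg) auto
    then have "u * s / lam \<ge> a * s / lam" using assms by (simp add: divide_right_mono)
    then have "exp (a * s / lam) \<le> e u" unfolding e_def by simp
    then show ?thesis unfolding c_def by simp
  qed
  have ftc: "((\<lambda>u. c * (u - m)^2) has_integral ((c * (a - m)^3 / 3) - (c * (0 - m)^3 / 3))) {0..a}"
  proof (rule fundamental_theorem_of_calculus)
    show "0 \<le> a" using assms by simp
    fix x assume "x \<in> {0..a}"
    show "((\<lambda>u. c * (u - m)^3 / 3) has_vector_derivative c * (x - m)^2) (at x within {0..a})"
      unfolding has_real_derivative_iff_has_vector_derivative[symmetric]
      by (auto intro!: derivative_eq_intros simp: field_simps power2_eq_square)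
  qed
  have pos3: "(a - m)^3 + m^3 > 0"
  proof -
    have "(a - m)^3 + m^3 = a * (3 * (m - a/2)^2 + a^2/4)"
      by (simp add: power2_eq_square power3_eq_cube algebra_simps)
    also have "\<dots> > 0" using assms by (intro mult_pos_pos) (auto intro: add_nonneg_pos)
    finally show ?thesis .
  qed
  have "0 < c * ((a - m)^3 + m^3) / 3" using c pos3 by simp
  also have "\<dots> = integral {0..a} (\<lambda>u. c * (u - m)^2)"
  proof -
    have I: "integral {0..a} (\<lambda>u. c * (u - m)^2) = c * (a - m)^3 / 3 - c * (0 - m)^3 / 3"
      by (rule integral_unique[OF ftc])
    have "c * (a - m)^3 / 3 - c * (0 - m)^3 / 3 = c * ((a - m)^3 + m^3) / 3"
      by (simp add: field_simps)
    then show ?thesis using I by simp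
  qed
  also have "\<dots> \<le> integral {0..a} (\<lambda>u. (u - m)^2 * e u)"
  proof (rule integral_le)
    show "(\<lambda>u. c * (u - m)^2) integrable_on {0..a}" using ftc by blast
    show "(\<lambda>u. (u - m)^2 * e u) integrable_on {0..a}"
      unfolding pt by (rule integrable_add[OF i3 i2])
    fix u assume "u \<in> {0..a}"
    then show "c * (u - m)^2 \<le> (u - m)^2 * e u"
      using ce[of u] by (simp add: mult.commute mult_right_mono)
  qed
  finally have "0 < Z * (W lam a 2 s - 2 * m * W lam a 1 s + m^2 * Z)"
    using Z eq by simp
  also have "Z * (W lam a 2 s - 2 * m * W lam a 1 s + m^2 * Z) = W lam a 2 s * Z - (W lam a 1 s)^2"
    unfolding m_def using Z by (simp add: field_simps power2_eq_square)
  finally show ?thesis unfolding Z_def .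
qed


theorem mainTheorem5:
  fixes lam a :: real
  assumes "lam > 0" and "a > 0"
  shows "(\<forall>x y. x < y \<and> y \<le> 0 \<longrightarrow> H_lam lam a x < H_lam lam a y)
       \<and> (\<forall>x y. 0 \<le> x \<and> x < y \<longrightarrow> H_lam lam a y < H_lam lam a x)
       \<and> (\<forall>y. H_lam lam a y \<le> H_lam lam a 0)
       \<and> H_lam lam a 0 = f_lam lam a 0
       \<and> f_lam lam a 0 = lam * ln (lam * (exp (a / lam) - 1))
       \<and> (a > lam * ln (1 + 1 / lam) \<longrightarrow> H_lam lam a 0 > 0)
       \<and> (a = lam * ln (1 + 1 / lam) \<longrightarrow> H_lam lam a 0 = 0)
       \<and> (a < lam * ln (1 + 1 / lam) \<longrightarrow> H_lam lam a 0 < 0)"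
proof -
  define Hc where "Hc y = y * W lam a 1 (1 - y) / W lam a 0 (1 - y) + lam * ln (W lam a 0 (1 - y))" for y
  have HH: "H_lam lam a y = Hc y" for y using H_eq[OF assms] unfolding Hc_def by simp
  define D where "D y = - y * ((W lam a 2 (1 - y) * W lam a 0 (1 - y) - (W lam a 1 (1 - y))^2)
      / (lam * (W lam a 0 (1 - y))^2))" for y
  have Zp: "W lam a 0 t > 0" for t using W0_pos[OF assms] .
  have Vp: "(W lam a 2 t * W lam a 0 t - (W lam a 1 t)^2) / (lam * (W lam a 0 t)^2) > 0" for t
    using var_pos[OF assms, of t] Zp[of t] assms by simp
  have der: "(Hc has_real_derivative D y) (at y)" for y
  proof -
    have W2: "W lam a 2 = W lam a (Suc (Suc 0))" by (simp add: numeral_2_eq_2)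
    show ?thesis
      unfolding Hc_def[abs_def] D_def W2
      using Zp[of "1 - y"] assms
      by (auto intro!: derivative_eq_intros W_deriv_chain[OF assms(1)] simp: field_simps power2_eq_square)
  qed
  have Dpos: "D y > 0" if "y < 0" for y
    unfolding D_def by (rule mult_pos_pos) (use that Vp in auto)
  have Dneg: "D y < 0" if "y > 0" for y
    unfolding D_def by (rule mult_neg_pos) (use that Vp in auto)
  have inc: "Hc x < Hc y" if "x < y" "y \<le> 0" for x y
  proof -
    obtain z where z: "x < z" "z < y" "Hc y - Hc x = (y - x) * D z"
      using MVT2[OF \<open>x < y\<close> der] by blast
    have "(y - x) * D z > 0" using z that Dpos[of z] by simp
    then show ?thesis using z by simp
  qed
  have dec: "Hc y < Hc x" if "0 \<le> x" "x < y" for x y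
  proof -
    obtain z where z: "x < z" "z < y" "Hc y - Hc x = (y - x) * D z"
      using MVT2[OF \<open>x < y\<close> der] by blast
    have "(y - x) * D z < 0" using z that Dneg[of z] by (simp add: mult_pos_neg)
    then show ?thesis using z by simp
  qed
  have mx: "Hc y \<le> Hc 0" for y
    using inc[of y 0] dec[of 0 y] by (cases "y < 0"; cases "y = 0") auto
  have W01: "W lam a 0 1 = lam * (exp (a / lam) - 1)"
    using W0_closed[OF assms, of 1] by simp
  have H0: "Hc 0 = lam * ln (lam * (exp (a / lam) - 1))"
    unfolding Hc_def using W01 by simp
  have F0: "f_lam lam a 0 = lam * ln (lam * (exp (a / lam) - 1))"
    unfolding f_lam_def by simp
  define E where "E = exp (a / lam)"
  have Epos: "E > 0" unfolding E_def by simp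
  have aE: "a = lam * ln E" unfolding E_def using assms by simp
  have Lpos: "1 + 1 / lam > 0" using assms by (simp add: add_pos_pos)
  have c1: "a > lam * ln (1 + 1 / lam) \<longleftrightarrow> lam * (E - 1) > 1"
  proof -
    have "a > lam * ln (1 + 1 / lam) \<longleftrightarrow> ln E > ln (1 + 1 / lam)"
      unfolding aE using assms by simp
    also have "\<dots> \<longleftrightarrow> E > 1 + 1 / lam" using Epos Lpos by simp
    also have "\<dots> \<longleftrightarrow> lam * (E - 1) > 1" using assms by (simp add: field_simps)
    finally show ?thesis .
  qed
  have c2: "a = lam * ln (1 + 1 / lam) \<longleftrightarrow> lam * (E - 1) = 1"
  proof -
    have "a = lam * ln (1 + 1 / lam) \<longleftrightarrow> ln E = ln (1 + 1 / lam)"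
      unfolding aE using assms by simp
    also have "\<dots> \<longleftrightarrow> E = 1 + 1 / lam" using Epos Lpos by simp
    also have "\<dots> \<longleftrightarrow> lam * (E - 1) = 1" using assms by (simp add: field_simps)
    finally show ?thesis .
  qed
  have c3: "a < lam * ln (1 + 1 / lam) \<longleftrightarrow> lam * (E - 1) < 1"
    using c1 c2 by linarith
  have qpos: "lam * (E - 1) > 0" using assms unfolding E_def by simp
  have s1: "a > lam * ln (1 + 1 / lam) \<longrightarrow> lam * ln (lam * (E - 1)) > 0"
    using c1 qpos assms by simp
  have s2: "a = lam * ln (1 + 1 / lam) \<longrightarrow> lam * ln (lam * (E - 1)) = 0"
    using c2 by simp
  have s3: "a < lam * ln (1 + 1 / lam) \<longrightarrow> lam * ln (lam * (E - 1)) < 0"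
    using c3 qpos assms by (simp add: mult_pos_neg)
  show ?thesis
    unfolding HH using inc dec mx H0 F0 s1 s2 s3 unfolding E_def by auto
qed



end
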